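(* Let $t>0$ and $u\ge 0$. For any $\phi\in C([0,t+u];\mathbb{R})$, \[ \mathcal{T}^t\bigl(\mathcal{T}^{t+u}(\phi)\bigr)(s)=\mathbb{T}^t_{\phi_t+\mathcal{T}^{t+u}(\phi)(t)}(\phi)(s),\qquad 0\le s\le t, \] where on both sides the transformations of duration $t$ act on the restrictions to $[0,t]$ of the paths.
   Context: For $r>0$ and $\psi\in C([0,r];\mathbb{R})$ let $A_s(\psi)=\int_0^s e^{2\psi_v}\,dv$. For $z\in\mathbb{R}$, $\mathbb{T}^r_z(\psi)(s)=\psi_s-\log\{1+\frac{A_s(\psi)}{A_r(\psi)}(e^z-1)\}$, $0\le s\le r$, and $\mathcal{T}^r(\psi)(s)=\mathbb{T}^r_{2\psi_r}(\psi)(s)$, $0\le s\le r$. *)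

theory Defs
  imports "HOL-Analysis.Analysis"
begin

text \<open>Paths on [0,r] are represented as functions real => real; only their values
on [0,r] matter for the definitions below (so restriction to [0,t] is implicit).\<close>

definition Aint :: "(real \<Rightarrow> real) \<Rightarrow> real \<Rightarrow> real" where
  "Aint \<psi> s = integral {0..s} (\<lambda>v. exp (2 * \<psi> v))"

definition TT :: "real \<Rightarrow> real \<Rightarrow> (real \<Rightarrow> real) \<Rightarrow> real \<Rightarrow> real" where
  "TT r z \<psi> s = \<psi> s - ln (1 + Aint \<psi> s / Aint \<psi> r * (exp z - 1))"

definition Tcal :: "real \<Rightarrow> (real \<Rightarrow> real) \<Rightarrow> real \<Rightarrow> real" where
  "Tcal r \<psi> s = TT r (2 * \<psi> r) \<psi> s"

end

theory Submission
  imports Defs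
begin

lemma ln_exp_aux: "(q::real) > 0 \<Longrightarrow> exp (2 * (a - ln q)) = exp (2*a) / q^2"
proof -
  assume q: "q > 0"
  have "exp (2 * (a - ln q)) = exp (2*a) / exp (2 * ln q)" by (simp add: right_diff_distrib exp_diff)
  also have "exp (2 * ln q) = q^2" using q by (simp add: exp_double)
  finally show ?thesis .
qed

lemma conv_pos:
  fixes l e :: real
  assumes "0 \<le> l" "l \<le> 1" "e > 0"
  shows "1 + l * (e - 1) > 0"
proof (cases "l < 1")
  case True
  have "l * e \<ge> 0" using assms by simp
  moreover have "1 + l * (e - 1) = (1 - l) + l * e" by (simp add: right_diff_distrib)
  ultimately show ?thesis using True by linarith
next
  case False
  then have "l = 1" using assms by simp
  then show ?thesis using assms by simp
qed

theorem proposition2p4: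
  fixes t u :: real and \<phi> :: "real \<Rightarrow> real"
  assumes "t > 0" and "u \<ge> 0"
    and "continuous_on {0..t+u} \<phi>"
  shows "\<forall>s\<in>{0..t}. Tcal t (Tcal (t+u) \<phi>) s = TT t (\<phi> t + Tcal (t+u) \<phi> t) \<phi> s"
proof
  define r where "r = t + u"
  have rt: "t \<le> r" "0 < r" using assms by (auto simp: r_def)
  define f where "f v = exp (2 * \<phi> v)" for v
  define A where "A x = integral {0..x} f" for x
  have Aeq: "Aint \<phi> x = A x" for x unfolding Aint_def A_def f_def by simp
  have fc: "continuous_on {0..r} f" unfolding f_def r_def
    by (intro continuous_intros assms(3))
  have fpos: "f v > 0" for v by (simp add: f_def)
  have fint: "f integrable_on {0..x}" if "x \<le> r" for x
    using integrable_continuous_real[OF continuous_on_subset[OF fc]] that by auto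
  have A0: "A 0 = 0" by (simp add: A_def)
  have Anon: "0 \<le> A x" if "x \<le> r" for x
    unfolding A_def using fint[OF that] fpos by (intro integral_nonneg) (auto simp: less_imp_le)
  have Amono: "A x \<le> A y" if "0 \<le> x" "x \<le> y" "y \<le> r" for x y
    unfolding A_def using that fint fpos
    by (intro integral_subset_le) (auto simp: less_imp_le)
  have Atpos: "A t > 0"
  proof -
    have "compact (\<phi> ` {0..t})"
      using continuous_on_subset[OF assms(3)] assms(2)
      by (intro compact_continuous_image) auto
    then obtain B where B: "\<And>x. x \<in> {0..t} \<Longrightarrow> norm (\<phi> x) \<le> B"
      by (meson bounded_iff compact_imp_bounded imageI)
    have "integral {0..t} (\<lambda>_. exp (-2*B)) \<le> A t"
      unfolding A_def
    proof (rule integral_le)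
      show "f integrable_on {0..t}" using fint rt by auto
      fix x assume "x \<in> {0..t}"
      then have "-2*B \<le> 2 * \<phi> x" using B[of x] by auto
      then show "exp (-2*B) \<le> f x" unfolding f_def by simp
    qed auto
    moreover have "integral {0..t} (\<lambda>_. exp (-2*B)) > 0"
      using assms(1) by simp
    ultimately show ?thesis by linarith
  qed
  have Arpos: "A r > 0" using Amono[of t r] Atpos rt assms(1) by auto
  define Er where "Er = exp (2 * \<phi> r)"
  define q where "q x = 1 + A x / A r * (Er - 1)" for x
  have qpos: "q x > 0" if "0 \<le> x" "x \<le> r" for x
  proof -
    have l: "0 \<le> A x / A r" "A x / A r \<le> 1"
      using Anon[of x] Amono[of x r] that Arpos by auto
    show ?thesis unfolding q_def using conv_pos[OF l] by (simp add: Er_def)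
  qed
  define \<psi> where "\<psi> = Tcal r \<phi>"
  have psi: "\<psi> x = \<phi> x - ln (q x)" for x
    unfolding \<psi>_def Tcal_def TT_def q_def Aeq Er_def by simp
  have epsi: "exp (2 * \<psi> x) = f x / (q x)^2" if "0 \<le> x" "x \<le> r" for x
    unfolding psi f_def using ln_exp_aux qpos[OF that] by simp
  define G where "G x = A x / q x" for x
  have Bval: "Aint \<psi> x = G x" if xr: "0 \<le> x" "x \<le> r" for x
  proof -
    have dA: "(A has_real_derivative f y) (at y within {0..r})" if "y \<in> {0..r}" for y
      using integral_has_vector_derivative[OF fc that]
      unfolding A_def has_real_derivative_iff_has_vector_derivative .
    have dG: "(G has_vector_derivative (f y / (q y)^2)) (at y within {0..x})"
      if y: "y \<in> {0..x}" for y
    proof -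
      have yr: "y \<in> {0..r}" using y xr by auto
      have qy: "q y \<noteq> 0" using qpos yr by force
      have "(G has_real_derivative
          (f y * q y - A y * (f y / A r * (Er - 1))) / (q y * q y)) (at y within {0..r})"
        unfolding G_def q_def
        using qy unfolding q_def
        by (intro derivative_eq_intros dA[OF yr] refl) (use dA[OF yr] Arpos in auto)
      moreover have "(f y * q y - A y * (f y / A r * (Er - 1))) / (q y * q y) = f y / (q y)^2"
        unfolding q_def by (simp add: power2_eq_square algebra_simps)
      ultimately have "(G has_real_derivative f y / (q y)^2) (at y within {0..r})" by simp
      then have "(G has_real_derivative f y / (q y)^2) (at y within {0..x})"
        by (rule DERIV_subset) (use xr y in auto)
      then show ?thesis unfolding has_real_derivative_iff_has_vector_derivative .
    qed
    have "((\<lambda>y. f y / (q y)^2) has_integral G x - G 0) {0..x}"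
      by (rule fundamental_theorem_of_calculus[OF xr(1)]) (use dG in auto)
    then have "integral {0..x} (\<lambda>y. f y / (q y)^2) = G x"
      using A0 by (simp add: G_def integral_unique)
    moreover have "integral {0..x} (\<lambda>v. exp (2 * \<psi> v)) = integral {0..x} (\<lambda>y. f y / (q y)^2)"
      by (rule integral_cong) (use epsi xr in auto)
    ultimately show ?thesis unfolding Aint_def by simp
  qed
  fix s assume s: "s \<in> {0..t}"
  have s0: "0 \<le> s" "s \<le> t" "s \<le> r" using s rt by auto
  define a where "a = A s"
  define b where "b = A t"
  define p where "p = q t"
  define qs where "qs = q s"
  define E where "E = exp (\<phi> t)"
  have bpos: "b > 0" using Atpos b_def by simp
  have ppos: "p > 0" using qpos rt assms(1) p_def by auto
  have qspos: "qs > 0" using qpos s0 qs_def by auto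
  have Epos: "E > 0" by (simp add: E_def)
  have ab: "0 \<le> a / b" "a / b \<le> 1" using Anon[of s] Amono[of s t] s0 rt bpos a_def b_def by auto
  have pq: "p = 1 + b / A r * (Er - 1)" "qs = 1 + a / A r * (Er - 1)"
    by (simp_all add: p_def qs_def q_def a_def b_def)
  have ept: "exp (\<psi> t) = E / p"
    using psi[of t] ppos by (simp add: exp_diff E_def p_def)
  have e2pt: "exp (2 * \<psi> t) = E^2 / p^2"
    using ept by (metis exp_double power2_eq_square mult_2 power_divide exp_add)
  have ephit: "exp (\<phi> t + \<psi> t) = E * (E / p)" using ept by (simp add: exp_add E_def)
  define Y where "Y = 1 + a / b * (E * (E / p) - 1)"
  have Ypos: "Y > 0"
  proof -
    have "E * (E/p) > 0" using Epos ppos by simp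
    then show ?thesis unfolding Y_def using conv_pos[OF ab] by simp
  qed
  have Bs: "Aint \<psi> s = a / qs" using Bval[of s] s0 by (simp add: G_def a_def qs_def)
  have Bt: "Aint \<psi> t = b / p" using Bval[of t] rt assms(1) by (simp add: G_def b_def p_def)
  define X where "X = 1 + Aint \<psi> s / Aint \<psi> t * (exp (2 * \<psi> t) - 1)"
  have key: "qs * X = Y"
  proof -
    define c where "c = (Er - 1) / A r"
    have pc: "p = 1 + b * c" "qs = 1 + a * c" using pq by (simp_all add: c_def)
    have "qs * X = qs + a * p / b * (E^2 / p^2 - 1)"
      unfolding X_def Bs Bt e2pt using bpos ppos qspos by (simp add: field_simps)
    also have "\<dots> = (qs - a * p / b) + a * E^2 / (b * p)"
      using bpos ppos by (simp add: field_simps power2_eq_square)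
    also have "qs - a * p / b = 1 - a / b"
      unfolding pc using bpos by (simp add: field_simps)
    also have "1 - a / b + a * E^2 / (b * p) = Y"
      unfolding Y_def using bpos ppos by (simp add: field_simps power2_eq_square)
    finally show ?thesis .
  qed
  have Xpos: "X > 0" using key Ypos qspos by (metis zero_less_mult_pos)
  have "Tcal t \<psi> s = \<psi> s - ln X" unfolding Tcal_def TT_def X_def by simp
  also have "\<dots> = \<phi> s - (ln qs + ln X)" using psi[of s] qs_def by simp
  also have "\<dots> = \<phi> s - ln Y" using key qspos Xpos ln_mult[of qs X] by simp
  also have "\<dots> = TT t (\<phi> t + \<psi> t) \<phi> s"
    unfolding TT_def Y_def ephit Aeq a_def b_def by simp
  finally show "Tcal t (Tcal (t+u) \<phi>) s = TT t (\<phi> t + Tcal (t+u) \<phi> t) \<phi> s"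
    unfolding \<psi>_def r_def .
qed

end
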